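(* Let $D\ge 1$, $\Omega=\{0,1,\dots,D-1\}$, and let $S_1,\dots,S_n\subseteq\Omega$ be nonempty sets. Let $\pi:\Omega\to\Omega$ be a permutation, applied to every set, and put $z_i=\min \pi(S_i)$ for $i=1,\dots,n$. Fix an integer $b\ge 1$ and let $e_{i,t}$ denote the $t$-th lowest bit of the binary representation of $z_i$. Then each of the following symmetric $n\times n$ matrices is positive (semi)definite, i.e. satisfies $\sum_{i,j}c_ic_jK_{ij}\ge 0$ for all $c\in\mathbb{R}^n$: (1) the resemblance matrix $\mathbf{R}$ with $R_{ij}=\frac{|S_i\cap S_j|}{|S_i\cup S_j|}$; (2) the minwise hashing matrix $\mathbf{M}$ with $M_{ij}=1\{z_i=z_j\}$; (3) the $b$-bit minwise hashing matrix $\mathbf{M}^{(b)}$ with $M^{(b)}_{ij}=\prod_{t=1}^b 1\{e_{i,t}=e_{j,t}\}$. Consequently, if $\pi_1,\dots,\pi_k$ are $k$ permutations (e.g. independent random permutations) and $\mathbf{M}^{(b)}_{(s)}$ denotes the $b$-bit minwise hashing matrix generated by $\pi_s$, then $\sum_{s=1}^k\mathbf{M}^{(b)}_{(s)}$ is also positive (semi)definite.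
   Context: Here "positive definite" is used in the sense of nonnegative definite: a symmetric matrix $\mathbf K$ with $\sum_{ij}c_ic_jK_{ij}\ge0$ for all real vectors $c$. $1\{\cdot\}$ denotes the indicator function. *)

theory Defs
  imports Complex_Main
begin

definition psd_matrix :: "nat \<Rightarrow> (nat \<Rightarrow> nat \<Rightarrow> real) \<Rightarrow> bool" where
  "psd_matrix n K \<longleftrightarrow>
     (\<forall>i<n. \<forall>j<n. K i j = K j i) \<and>
     (\<forall>c :: nat \<Rightarrow> real. (\<Sum>i<n. \<Sum>j<n. c i * c j * K i j) \<ge> 0)"

definition ind :: "bool \<Rightarrow> real" where
  "ind P = (if P then 1 else 0)"

definition minhash :: "(nat \<Rightarrow> nat) \<Rightarrow> nat set \<Rightarrow> nat" where
  "minhash \<pi> S = Min (\<pi> ` S)"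

definition bbit_entry :: "nat \<Rightarrow> nat \<Rightarrow> nat \<Rightarrow> real" where
  "bbit_entry b x y = (\<Prod>t\<in>{1..b}. ind (bit x (t - 1) = bit y (t - 1)))"

end

theory Submission
  imports Defs "HOL-Combinatorics.Permutations"
begin
lemma psd_cong:
  assumes "psd_matrix n K" "\<And>i j. i < n \<Longrightarrow> j < n \<Longrightarrow> K i j = K' i j"
  shows "psd_matrix n K'"
proof -
  have "(\<Sum>i<n. \<Sum>j<n. c i * c j * K i j) = (\<Sum>i<n. \<Sum>j<n. c i * c j * K' i j)" for c
    using assms(2) by (intro sum.cong) auto
  with assms show ?thesis unfolding psd_matrix_def by auto
qed

lemma psd_sum:
  assumes "finite I" "\<And>s. s \<in> I \<Longrightarrow> psd_matrix n (K s)"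
  shows "psd_matrix n (\<lambda>i j. \<Sum>s\<in>I. K s i j)"
proof -
  have sym: "\<forall>i<n. \<forall>j<n. (\<Sum>s\<in>I. K s i j) = (\<Sum>s\<in>I. K s j i)"
    using assms(2) unfolding psd_matrix_def by (auto intro!: sum.cong)
  have "(\<Sum>i<n. \<Sum>j<n. c i * c j * (\<Sum>s\<in>I. K s i j)) =
        (\<Sum>i<n. \<Sum>s\<in>I. \<Sum>j<n. c i * c j * K s i j)" for c
    by (simp add: sum_distrib_left sum.swap[of _ I "{..<n}"])
  also have "\<dots> c = (\<Sum>s\<in>I. \<Sum>i<n. \<Sum>j<n. c i * c j * K s i j)" for c
    by (rule sum.swap)
  finally have e: "(\<Sum>i<n. \<Sum>j<n. c i * c j * (\<Sum>s\<in>I. K s i j)) =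
        (\<Sum>s\<in>I. \<Sum>i<n. \<Sum>j<n. c i * c j * K s i j)" for c .
  moreover have "(\<Sum>s\<in>I. \<Sum>i<n. \<Sum>j<n. c i * c j * K s i j) \<ge> 0" for c
    by (rule sum_nonneg) (use assms(2) in \<open>auto simp: psd_matrix_def\<close>)
  ultimately show ?thesis using sym unfolding psd_matrix_def by auto
qed
lemma psd_ind: "psd_matrix n (\<lambda>i j. ind (f i = f j))"
proof -
  let ?V = "f ` {..<n}"
  have eq: "ind (f i = f j) = (\<Sum>v\<in>?V. ind (f i = v) * ind (f j = v))"
    if "i < n" "j < n" for i j
  proof -
    have "(\<Sum>v\<in>?V. ind (f i = v) * ind (f j = v)) = (\<Sum>v\<in>?V. if v = f i then ind (f i = f j) else 0)"
      by (intro sum.cong) (auto simp: ind_def)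
    also have "\<dots> = ind (f i = f j)" using that by (simp add: sum.delta')
    finally show ?thesis by simp
  qed
  have "(\<Sum>i<n. \<Sum>j<n. c i * c j * ind (f i = f j)) =
        (\<Sum>i<n. \<Sum>j<n. c i * c j * (\<Sum>v\<in>?V. ind (f i = v) * ind (f j = v)))" for c
    using eq by (intro sum.cong) auto
  also have "\<dots> c = (\<Sum>i<n. \<Sum>j<n. \<Sum>v\<in>?V. (c i * ind (f i = v)) * (c j * ind (f j = v)))" for c
    by (simp add: sum_distrib_left mult_ac)
  also have "\<dots> c = (\<Sum>i<n. \<Sum>v\<in>?V. \<Sum>j<n. (c i * ind (f i = v)) * (c j * ind (f j = v)))" for c
    by (rule sum.cong[OF refl], rule sum.swap)
  also have "\<dots> c = (\<Sum>v\<in>?V. \<Sum>i<n. \<Sum>j<n. (c i * ind (f i = v)) * (c j * ind (f j = v)))" for c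
    by (rule sum.swap)
  also have "\<dots> c = (\<Sum>v\<in>?V. (\<Sum>i<n. c i * ind (f i = v)) * (\<Sum>j<n. c j * ind (f j = v)))" for c
    by (simp only: sum_product)
  also have "\<dots> c \<ge> 0" for c by (intro sum_nonneg) auto
  finally show ?thesis unfolding psd_matrix_def by (auto simp: ind_def)
qed
lemma psd_scale:
  assumes "a \<ge> 0" "psd_matrix n K"
  shows "psd_matrix n (\<lambda>i j. a * K i j)"
proof -
  have "(\<Sum>i<n. \<Sum>j<n. c i * c j * (a * K i j)) = a * (\<Sum>i<n. \<Sum>j<n. c i * c j * K i j)" for c
    by (simp add: sum_distrib_left mult_ac)
  with assms show ?thesis unfolding psd_matrix_def by auto
qed

lemma bbit_ind:
  "bbit_entry b x y = ind ((\<lambda>t. if t \<in> {1..b} then bit x (t - 1) else False) =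
                          (\<lambda>t. if t \<in> {1..b} then bit y (t - 1) else False))"
proof (cases "\<forall>t\<in>{1..b}. bit x (t - 1) = bit y (t - 1)")
  case True
  then have "bbit_entry b x y = 1" unfolding bbit_entry_def by (simp add: ind_def)
  moreover have "(\<lambda>t. if t \<in> {1..b} then bit x (t - 1) else False) =
                 (\<lambda>t. if t \<in> {1..b} then bit y (t - 1) else False)"
    using True by auto
  ultimately show ?thesis by (simp add: ind_def)
next
  case False
  then obtain t where t: "t \<in> {1..b}" "bit x (t - 1) \<noteq> bit y (t - 1)" by blast
  have z: "ind (bit x (t - 1) = bit y (t - 1)) = 0" using t by (simp add: ind_def)
  have "bbit_entry b x y = 0" unfolding bbit_entry_def
    by (rule prod_zero) (use t(1) z in blast)+
  moreover have "(\<lambda>t. if t \<in> {1..b} then bit x (t - 1) else False) \<noteq>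
                 (\<lambda>t. if t \<in> {1..b} then bit y (t - 1) else False)"
  proof
    assume eq: "(\<lambda>t. if t \<in> {1..b} then bit x (t - 1) else False) =
                 (\<lambda>t. if t \<in> {1..b} then bit y (t - 1) else False)"
    have "(\<lambda>t. if t \<in> {1..b} then bit x (t - 1) else False) t =
                 (\<lambda>t. if t \<in> {1..b} then bit y (t - 1) else False) t" using eq by (rule fun_cong)
    then show False using t by simp
  qed
  ultimately show ?thesis by (simp add: ind_def)
qed

lemma psd_bbit: "psd_matrix n (\<lambda>i j. bbit_entry b (g i) (g j))"
  using psd_ind[of n "\<lambda>i. (\<lambda>t. if t \<in> {1..b} then bit (g i) (t - 1) else False)"]
  by (simp add: bbit_ind)

context
  fixes W A B :: "nat set"
  assumes finW: "finite W" and AW: "A \<subseteq> W" and BW: "B \<subseteq> W"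
    and Ane: "A \<noteq> {}" and Bne: "B \<noteq> {}"
begin

definition "EE x = {\<sigma>. \<sigma> permutes W \<and> (\<forall>y\<in>A \<union> B. y \<noteq> x \<longrightarrow> \<sigma> x < (\<sigma> y :: nat))}"

lemma finA: "finite A" using finW AW finite_subset by auto
lemma finB: "finite B" using finW BW finite_subset by auto

lemma min_in:
  assumes "\<sigma> \<in> EE x" "x \<in> C" "C \<subseteq> A \<union> B"
  shows "Min (\<sigma> ` C) = \<sigma> x"
proof -
  have "finite C" using assms(3) finA finB finite_subset by blast
  moreover have "\<sigma> x \<le> \<sigma> z" if "z \<in> C" for z
  proof (cases "z = x")
    case False
    then show ?thesis using assms that unfolding EE_def by (auto intro: less_imp_le)
  qed simp
  ultimately show ?thesis using assms(2) by (intro Min_eqI) auto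
qed

lemma min_out:
  assumes "\<sigma> \<in> EE x" "x \<notin> C" "C \<subseteq> A \<union> B" "C \<noteq> {}"
  shows "Min (\<sigma> ` C) > \<sigma> x"
proof -
  have "finite C" using assms(3) finA finB finite_subset by blast
  then show ?thesis using assms unfolding EE_def
    by (subst Min_gr_iff) auto
qed

lemma EE_cover:
  assumes "\<sigma> permutes W"
  shows "\<exists>x\<in>A \<union> B. \<sigma> \<in> EE x"
proof -
  have fin: "finite (A \<union> B)" using finA finB by auto
  have "Min (\<sigma> ` (A \<union> B)) \<in> \<sigma> ` (A \<union> B)" using fin Ane by (intro Min_in) auto
  then obtain x where x: "x \<in> A \<union> B" "\<sigma> x = Min (\<sigma> ` (A \<union> B))"
    by (metis imageE)
  have "\<sigma> x < \<sigma> y" if "y \<in> A \<union> B" "y \<noteq> x" for y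
  proof -
    have "\<sigma> x \<le> \<sigma> y" using x that fin by auto
    moreover have "\<sigma> x \<noteq> \<sigma> y" using permutes_inj[OF assms] that by (metis injD)
    ultimately show ?thesis by simp
  qed
  then have "\<sigma> \<in> EE x" using assms unfolding EE_def by blast
  then show ?thesis using x(1) by blast
qed

lemma EE_disj: "x \<noteq> x' \<Longrightarrow> x \<in> A \<union> B \<Longrightarrow> x' \<in> A \<union> B \<Longrightarrow> EE x \<inter> EE x' = {}"
proof (rule ccontr)
  assume "x \<noteq> x'" "x \<in> A \<union> B" "x' \<in> A \<union> B" "EE x \<inter> EE x' \<noteq> {}"
  then obtain \<sigma> where "\<sigma> \<in> EE x" "\<sigma> \<in> EE x'" by blast
  then have "\<sigma> x < \<sigma> x'" "\<sigma> x' < \<sigma> x" using \<open>x \<noteq> x'\<close> \<open>x \<in> A \<union> B\<close> \<open>x' \<in> A \<union> B\<close>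
    unfolding EE_def by auto
  then show False by simp
qed

lemma EE_card:
  assumes "x \<in> A \<union> B" "x' \<in> A \<union> B"
  shows "card (EE x) = card (EE x')"
proof -
  let ?t = "transpose x x'"
  have xW: "x \<in> W" "x' \<in> W" using assms AW BW by auto
  have tp: "?t permutes W" using xW by (rule permutes_swap_id)
  have map: "\<sigma> \<circ> transpose a b \<in> EE b" if "\<sigma> \<in> EE a" "a \<in> A \<union> B" "b \<in> A \<union> B" for \<sigma> a b
  proof -
    have p: "\<sigma> permutes W" using that unfolding EE_def by auto
    have "transpose a b permutes W" using that AW BW by (intro permutes_swap_id) auto
    then have "\<sigma> \<circ> transpose a b permutes W" using p by (rule permutes_compose)
    moreover have "(\<sigma> \<circ> transpose a b) b < (\<sigma> \<circ> transpose a b) y" if "y \<in> A \<union> B" "y \<noteq> b" for y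
      using \<open>\<sigma> \<in> EE a\<close> \<open>b \<in> A \<union> B\<close> that unfolding EE_def
      by (cases "y = a") (auto simp: transpose_def)
    ultimately show ?thesis unfolding EE_def by auto
  qed
  have "bij_betw (\<lambda>\<sigma>. \<sigma> \<circ> ?t) (EE x) (EE x')"
  proof (rule bij_betwI[where g = "\<lambda>\<sigma>. \<sigma> \<circ> transpose x' x"])
    show "(\<lambda>\<sigma>. \<sigma> \<circ> ?t) \<in> EE x \<rightarrow> EE x'" using map assms by auto
    show "(\<lambda>\<sigma>. \<sigma> \<circ> transpose x' x) \<in> EE x' \<rightarrow> EE x" using map assms by auto
    show "\<sigma> \<circ> ?t \<circ> transpose x' x = \<sigma>" for \<sigma>
      by (simp add: o_assoc[symmetric] transpose_commute)
    show "\<sigma> \<circ> transpose x' x \<circ> ?t = \<sigma>" for \<sigma>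
      by (simp add: o_assoc[symmetric] transpose_commute)
  qed
  then show ?thesis by (rule bij_betw_same_card)
qed

lemma resemblance_count:
  "real (card (A \<inter> B)) / real (card (A \<union> B)) =
   (\<Sum>\<sigma>\<in>{\<sigma>. \<sigma> permutes W}. (1 / real (card {\<sigma>. \<sigma> permutes W})) *
        ind (minhash \<sigma> A = minhash \<sigma> B))"
proof -
  let ?P = "{\<sigma>. \<sigma> permutes W}"
  let ?U = "A \<union> B"
  have finP: "finite ?P" using finW by (rule finite_permutations)
  have finU: "finite ?U" using finA finB by auto
  obtain x0 where x0: "x0 \<in> ?U" using Ane by auto
  define N where "N = card (EE x0)"
  have cardE: "card (EE x) = N" if "x \<in> ?U" for x using EE_card[OF that x0] unfolding N_def .
  have EsubP: "EE x \<subseteq> ?P" for x unfolding EE_def by auto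
  have finE: "finite (EE x)" for x using finite_subset[OF EsubP finP] .
  have Pu: "?P = (\<Union>x\<in>?U. EE x)"
  proof (intro equalityI subsetI)
    fix \<sigma> assume "\<sigma> \<in> ?P"
    then obtain x where "x \<in> ?U" "\<sigma> \<in> EE x" using EE_cover by blast
    then show "\<sigma> \<in> (\<Union>x\<in>?U. EE x)" by blast
  next
    fix \<sigma> assume "\<sigma> \<in> (\<Union>x\<in>?U. EE x)"
    then show "\<sigma> \<in> ?P" using EsubP by blast
  qed
  have "card ?P = (\<Sum>x\<in>?U. card (EE x))"
    unfolding Pu using finU finE EE_disj by (intro card_UN_disjoint) auto
  also have "\<dots> = card ?U * N" using cardE by simp
  finally have cP: "card ?P = card ?U * N" .
  have Q: "{\<sigma>\<in>?P. minhash \<sigma> A = minhash \<sigma> B} = (\<Union>x\<in>A \<inter> B. EE x)"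
  proof (intro equalityI subsetI)
    fix \<sigma> assume "\<sigma> \<in> {\<sigma>\<in>?P. minhash \<sigma> A = minhash \<sigma> B}"
    then have s: "\<sigma> permutes W" "Min (\<sigma> ` A) = Min (\<sigma> ` B)" by (auto simp: minhash_def)
    obtain x where x: "x \<in> ?U" "\<sigma> \<in> EE x" using EE_cover s(1) by auto
    have "x \<in> A \<inter> B"
    proof (rule ccontr)
      assume "x \<notin> A \<inter> B"
      then consider "x \<in> A" "x \<notin> B" | "x \<in> B" "x \<notin> A" using x by auto
      then show False
      proof cases
        case 1 then show False using min_in[OF x(2) 1(1) Un_upper1] min_out[OF x(2) 1(2) Un_upper2 Bne] s(2) by simp
      next
        case 2 then show False using min_in[OF x(2) 2(1) Un_upper2] min_out[OF x(2) 2(2) Un_upper1 Ane] s(2) by simp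
      qed
    qed
    then show "\<sigma> \<in> (\<Union>x\<in>A \<inter> B. EE x)" using x by auto
  next
    fix \<sigma> assume "\<sigma> \<in> (\<Union>x\<in>A \<inter> B. EE x)"
    then obtain x where x: "x \<in> A \<inter> B" "\<sigma> \<in> EE x" by auto
    then show "\<sigma> \<in> {\<sigma>\<in>?P. minhash \<sigma> A = minhash \<sigma> B}"
    proof -
      have "Min (\<sigma> ` A) = \<sigma> x" using min_in[OF x(2) _ Un_upper1] x(1) by blast
      moreover have "Min (\<sigma> ` B) = \<sigma> x" using min_in[OF x(2) _ Un_upper2] x(1) by blast
      moreover have "\<sigma> \<in> ?P" using EsubP x(2) by blast
      ultimately show ?thesis by (simp add: minhash_def)
    qed
  qed
  have "card {\<sigma>\<in>?P. minhash \<sigma> A = minhash \<sigma> B} = (\<Sum>x\<in>A \<inter> B. card (EE x))"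
    unfolding Q using finA finE EE_disj by (intro card_UN_disjoint) auto
  also have "\<dots> = card (A \<inter> B) * N" using cardE by simp
  finally have cQ: "card {\<sigma>\<in>?P. minhash \<sigma> A = minhash \<sigma> B} = card (A \<inter> B) * N" .
  have "(\<Sum>\<sigma>\<in>?P. (1 / real (card ?P)) * ind (minhash \<sigma> A = minhash \<sigma> B))
        = (1 / real (card ?P)) * (\<Sum>\<sigma>\<in>?P. ind (minhash \<sigma> A = minhash \<sigma> B))"
    by (simp add: sum_distrib_left)
  also have "(\<Sum>\<sigma>\<in>?P. ind (minhash \<sigma> A = minhash \<sigma> B)) = real (card {\<sigma>\<in>?P. minhash \<sigma> A = minhash \<sigma> B})"
    unfolding ind_def using finP by (simp add: sum.If_cases Int_def)
  finally have "(\<Sum>\<sigma>\<in>?P. (1 / real (card ?P)) * ind (minhash \<sigma> A = minhash \<sigma> B))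
        = real (card (A \<inter> B) * N) / real (card ?U * N)" using cQ cP by simp
  moreover have "N > 0"
  proof -
    have "id \<in> ?P" by (simp add: permutes_id)
    then have "card ?P > 0" using finP card_gt_0_iff by blast
    then show ?thesis using cP by simp
  qed
  ultimately show ?thesis by simp
qed

end

theorem theorem2:
  fixes D n b k :: nat
    and S :: "nat \<Rightarrow> nat set"
    and \<pi> :: "nat \<Rightarrow> nat"
    and \<pi>s :: "nat \<Rightarrow> nat \<Rightarrow> nat"
  assumes "D \<ge> 1"
    and "\<And>i. i < n \<Longrightarrow> S i \<subseteq> {..<D} \<and> S i \<noteq> {}"
    and "bij_betw \<pi> {..<D} {..<D}"
    and "b \<ge> 1"
    and "\<And>s. s \<in> {1..k} \<Longrightarrow> bij_betw (\<pi>s s) {..<D} {..<D}"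
  shows "psd_matrix n (\<lambda>i j. real (card (S i \<inter> S j)) / real (card (S i \<union> S j)))
       \<and> psd_matrix n (\<lambda>i j. ind (minhash \<pi> (S i) = minhash \<pi> (S j)))
       \<and> psd_matrix n (\<lambda>i j. bbit_entry b (minhash \<pi> (S i)) (minhash \<pi> (S j)))
       \<and> psd_matrix n (\<lambda>i j. \<Sum>s\<in>{1..k}.
             bbit_entry b (minhash (\<pi>s s) (S i)) (minhash (\<pi>s s) (S j)))"
proof (intro conjI)
  let ?P = "{\<sigma>. \<sigma> permutes {..<D}}"
  have "psd_matrix n (\<lambda>i j. \<Sum>\<sigma>\<in>?P. (1 / real (card ?P)) * ind (minhash \<sigma> (S i) = minhash \<sigma> (S j)))"
    by (intro psd_sum psd_scale psd_ind finite_permutations) auto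
  then show "psd_matrix n (\<lambda>i j. real (card (S i \<inter> S j)) / real (card (S i \<union> S j)))"
    by (rule psd_cong) (use assms(2) in \<open>simp add: resemblance_count[of "{..<D}"]\<close>)
  show "psd_matrix n (\<lambda>i j. ind (minhash \<pi> (S i) = minhash \<pi> (S j)))" by (rule psd_ind)
  show "psd_matrix n (\<lambda>i j. bbit_entry b (minhash \<pi> (S i)) (minhash \<pi> (S j)))" by (rule psd_bbit)
  show "psd_matrix n (\<lambda>i j. \<Sum>s\<in>{1..k}.
             bbit_entry b (minhash (\<pi>s s) (S i)) (minhash (\<pi>s s) (S j)))"
    by (intro psd_sum psd_bbit) auto
qed

end
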